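(* Let $\mathcal R$ be a commutative ring with identity, $\mathcal M,\mathcal N$ modules over $\mathcal R$, $\Omega\subseteq\mathcal M_{\mathrm{nc}}$ a right admissible nc set, $f:\Omega\to\mathcal N_{\mathrm{nc}}$ a nc function, $n\in\mathbb N$ and $Y\in\Omega_n$. Then for each $N\in\mathbb N$ and every $X\in\Omega_n$, $$f(X)=\sum_{\ell=0}^N\Delta_R^\ell f(\underbrace{Y,\dots,Y}_{\ell+1})(\underbrace{X-Y,\dots,X-Y}_{\ell})+\Delta_R^{N+1}f(\underbrace{Y,\dots,Y}_{N+1},X)(\underbrace{X-Y,\dots,X-Y}_{N+1}).$$
   Context: $\mathcal M_{\mathrm{nc}}=\coprod_{n\ge1}\mathcal M^{n\times n}$; matrices over $\mathcal R$ act on matrices over $\mathcal M,\mathcal N$ by matrix multiplication; $X\oplus Y=\begin{bmatrix}X&0\\0&Y\end{bmatrix}$. A nc set is a subset $\Omega\subseteq\mathcal M_{\mathrm{nc}}$ closed under direct sums, $\Omega_n=\Omega\cap\mathcal M^{n\times n}$. A nc function $f:\Omega\to\mathcal N_{\mathrm{nc}}$ satisfies $f(\Omega_n)\subseteq\mathcal N^{n\times n}$, $f(X\oplus Y)=f(X)\oplus f(Y)$, and $f(SXS^{-1})=Sf(X)S^{-1}$ whenever $S\in\mathcal R^{n\times n}$ is invertible and $X,SXS^{-1}\in\Omega_n$. $\Omega$ is right admissible if for all $X\in\Omega_n$, $Y\in\Omega_m$, $Z\in\mathcal M^{n\times m}$ there is an invertible $r\in\mathcal R$ with $\begin{bmatrix}X&rZ\\0&Y\end{bmatrix}\in\Omega_{n+m}$.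 Higher order difference-differential operators: let $\tilde\Omega=\{SXS^{-1}: X\in\Omega_n,\ S\in\mathcal R^{n\times n}\text{ invertible},\ n\in\mathbb N\}$; $f$ extends uniquely to a nc function $\tilde f$ on $\tilde\Omega$ by $\tilde f(SXS^{-1})=Sf(X)S^{-1}$. If $\Omega$ is right admissible, then for $X^j\in\Omega_{n_j}$ ($j=0,\dots,\ell$) and $Z^j\in\mathcal M^{n_{j-1}\times n_j}$ ($j=1,\dots,\ell$), the block upper bidiagonal matrix $B$ with diagonal blocks $X^0,\dots,X^\ell$, blocks $Z^1,\dots,Z^\ell$ directly above the diagonal and zeros elsewhere lies in $\tilde\Omega$, and $\Delta_R^\ell f(X^0,\dots,X^\ell)(Z^1,\dots,Z^\ell)\in\mathcal N^{n_0\times n_\ell}$ denotes the $(1,\ell+1)$ block entry of $\tilde f(B)$; it is $\mathcal R$-multilinear in $(Z^1,\dots,Z^\ell)$, and $\Delta_R^0f=f$. *)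

theory Defs
  imports Main "HOL.Modules" "HOL-Library.Function_Algebras"
begin

text \<open>Matrices over a type 'a are encoded as functions nat => nat => 'a (0-based indices);
  a matrix of size p x q is one that vanishes outside [0,p) x [0,q).  Pointwise
  addition/subtraction/sums of matrices come from Function_Algebras.  An element
  X of Omega_n is a pair (n, X) in Omega.  Modules over R are given by the
  library locale module with scalar multiplications scM, scN.\<close>

type_synonym 'a mat = "nat \<Rightarrow> nat \<Rightarrow> 'a"

definition mat_on :: "nat \<Rightarrow> nat \<Rightarrow> ('a::zero) mat \<Rightarrow> bool" where
  "mat_on p q X \<longleftrightarrow> (\<forall>i j. (p \<le> i \<or> q \<le> j) \<longrightarrow> X i j = 0)"

definition rmatmul :: "nat \<Rightarrow> ('r::comm_ring_1) mat \<Rightarrow> 'r mat \<Rightarrow> 'r mat" where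
  "rmatmul n S T = (\<lambda>i j. \<Sum>k<n. S i k * T k j)"

definition idm :: "nat \<Rightarrow> ('r::comm_ring_1) mat" where
  "idm n = (\<lambda>i j. if i = j \<and> i < n then 1 else 0)"

definition inv_pair :: "nat \<Rightarrow> ('r::comm_ring_1) mat \<Rightarrow> 'r mat \<Rightarrow> bool" where
  "inv_pair n S T \<longleftrightarrow> mat_on n n S \<and> mat_on n n T \<and>
     rmatmul n S T = idm n \<and> rmatmul n T S = idm n"

definition lact :: "('r::comm_ring_1 \<Rightarrow> 'm::ab_group_add \<Rightarrow> 'm) \<Rightarrow> nat \<Rightarrow> 'r mat \<Rightarrow> 'm mat \<Rightarrow> 'm mat" where
  "lact sc n S X = (\<lambda>i j. \<Sum>k<n. sc (S i k) (X k j))"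

definition ract :: "('r::comm_ring_1 \<Rightarrow> 'm::ab_group_add \<Rightarrow> 'm) \<Rightarrow> nat \<Rightarrow> 'm mat \<Rightarrow> 'r mat \<Rightarrow> 'm mat" where
  "ract sc n X T = (\<lambda>i j. \<Sum>k<n. sc (T k j) (X i k))"

definition sim :: "('r::comm_ring_1 \<Rightarrow> 'm::ab_group_add \<Rightarrow> 'm) \<Rightarrow> nat \<Rightarrow> 'r mat \<Rightarrow> 'm mat \<Rightarrow> 'r mat \<Rightarrow> 'm mat" where
  "sim sc n S X T = ract sc n (lact sc n S X) T"

definition smat :: "('r \<Rightarrow> 'm \<Rightarrow> 'm) \<Rightarrow> 'r \<Rightarrow> 'm mat \<Rightarrow> 'm mat" where
  "smat sc r Z = (\<lambda>i j. sc r (Z i j))"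

definition dsum :: "nat \<Rightarrow> ('a::zero) mat \<Rightarrow> nat \<Rightarrow> 'a mat \<Rightarrow> 'a mat" where
  "dsum n X m Y = (\<lambda>i j. if i < n \<and> j < n then X i j
      else if n \<le> i \<and> i < n + m \<and> n \<le> j \<and> j < n + m then Y (i - n) (j - n) else 0)"

definition blockm :: "nat \<Rightarrow> nat \<Rightarrow> ('a::zero) mat \<Rightarrow> 'a mat \<Rightarrow> 'a mat \<Rightarrow> 'a mat" where
  "blockm n m X Z Y = (\<lambda>i j. if i < n \<and> j < n then X i j
      else if i < n \<and> n \<le> j \<and> j < n + m then Z i (j - n)
      else if n \<le> i \<and> i < n + m \<and> n \<le> j \<and> j < n + m then Y (i - n) (j - n) else 0)"

definition nc_set :: "(nat \<times> ('m::zero) mat) set \<Rightarrow> bool" where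
  "nc_set \<Omega> \<longleftrightarrow> (\<forall>(n, X) \<in> \<Omega>. 0 < n \<and> mat_on n n X) \<and>
     (\<forall>(n, X) \<in> \<Omega>. \<forall>(m, Y) \<in> \<Omega>. (n + m, dsum n X m Y) \<in> \<Omega>)"

definition right_admissible ::
  "('r::comm_ring_1 \<Rightarrow> 'm::ab_group_add \<Rightarrow> 'm) \<Rightarrow> (nat \<times> 'm mat) set \<Rightarrow> bool" where
  "right_admissible scM \<Omega> \<longleftrightarrow>
     (\<forall>(n, X) \<in> \<Omega>. \<forall>(m, Y) \<in> \<Omega>. \<forall>Z. mat_on n m Z \<longrightarrow>
        (\<exists>r s. r * s = 1 \<and> (n + m, blockm n m X (smat scM r Z) Y) \<in> \<Omega>))"

definition nc_fun ::
  "('r::comm_ring_1 \<Rightarrow> 'm::ab_group_add \<Rightarrow> 'm) \<Rightarrow> ('r \<Rightarrow> 'n::ab_group_add \<Rightarrow> 'n) \<Rightarrow>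
   (nat \<times> 'm mat) set \<Rightarrow> (nat \<Rightarrow> 'm mat \<Rightarrow> 'n mat) \<Rightarrow> bool" where
  "nc_fun scM scN \<Omega> f \<longleftrightarrow>
     (\<forall>(n, X) \<in> \<Omega>. mat_on n n (f n X)) \<and>
     (\<forall>(n, X) \<in> \<Omega>. \<forall>(m, Y) \<in> \<Omega>. f (n + m) (dsum n X m Y) = dsum n (f n X) m (f m Y)) \<and>
     (\<forall>n X S T. (n, X) \<in> \<Omega> \<longrightarrow> inv_pair n S T \<longrightarrow> (n, sim scM n S X T) \<in> \<Omega> \<longrightarrow>
        f n (sim scM n S X T) = sim scN n S (f n X) T)"

text \<open>The extension f~ to Omega~ = {S X S^{-1}}: f~(S X S^{-1}) = S f(X) S^{-1}.\<close>
definition nc_ext ::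
  "('r::comm_ring_1 \<Rightarrow> 'm::ab_group_add \<Rightarrow> 'm) \<Rightarrow> ('r \<Rightarrow> 'n::ab_group_add \<Rightarrow> 'n) \<Rightarrow>
   (nat \<times> 'm mat) set \<Rightarrow> (nat \<Rightarrow> 'm mat \<Rightarrow> 'n mat) \<Rightarrow> nat \<Rightarrow> 'm mat \<Rightarrow> 'n mat" where
  "nc_ext scM scN \<Omega> f n B = (SOME W. \<exists>X S T. (n, X) \<in> \<Omega> \<and> inv_pair n S T \<and>
      B = sim scM n S X T \<and> W = sim scN n S (f n X) T)"

definition boff :: "nat list \<Rightarrow> nat \<Rightarrow> nat" where
  "boff ns k = sum_list (take k ns)"

definition bidx :: "nat list \<Rightarrow> nat \<Rightarrow> nat" where
  "bidx ns i = (LEAST p. i < boff ns (Suc p))"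

text \<open>Block upper bidiagonal matrix with diagonal blocks Xs!0..Xs!l (sizes ns) and
  superdiagonal blocks Zs!0..Zs!(l-1) (= Z^1..Z^l).\<close>
definition bidiag :: "nat list \<Rightarrow> ('a::zero) mat list \<Rightarrow> 'a mat list \<Rightarrow> 'a mat" where
  "bidiag ns Xs Zs = (\<lambda>i j. if i < sum_list ns \<and> j < sum_list ns then
      (let p = bidx ns i; q = bidx ns j in
        if p = q then (Xs ! p) (i - boff ns p) (j - boff ns q)
        else if q = Suc p then (Zs ! p) (i - boff ns p) (j - boff ns q)
        else 0)
     else 0)"

text \<open>Delta_R^l f(X^0,...,X^l)(Z^1,...,Z^l): the (1,l+1) block of f~(bidiagonal matrix),
  where l = length ns - 1.\<close>
definition Delta ::
  "('r::comm_ring_1 \<Rightarrow> 'm::ab_group_add \<Rightarrow> 'm) \<Rightarrow> ('r \<Rightarrow> 'n::ab_group_add \<Rightarrow> 'n) \<Rightarrow>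
   (nat \<times> 'm mat) set \<Rightarrow> (nat \<Rightarrow> 'm mat \<Rightarrow> 'n mat) \<Rightarrow>
   nat list \<Rightarrow> 'm mat list \<Rightarrow> 'm mat list \<Rightarrow> 'n mat" where
  "Delta scM scN \<Omega> f ns Xs Zs =
     (let l = length ns - 1;
          F = nc_ext scM scN \<Omega> f (sum_list ns) (bidiag ns Xs Zs)
      in (\<lambda>i j. if i < ns ! 0 \<and> j < ns ! l then F (i + boff ns 0) (j + boff ns l) else 0))"

end

theory Submission
  imports Defs
begin


lemma sum_split_add: "(\<Sum>k<m+n. g k) = (\<Sum>k<m. g k) + (\<Sum>k<n. g (m+k::nat))"
  by (induct n) (auto simp: add_ac)

lemma sum_delta_lt: "(\<Sum>k<n. if i = k \<and> i < n then g k else 0) = (if i < (n::nat) then g i else 0)"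
  by (cases "i < n") (auto simp: sum.delta)

lemma sum_delta_lt': "(\<Sum>k<n. if k = j \<and> k < n then g k else 0) = (if j < (n::nat) then g j else 0)"
  by (cases "j < n") (auto simp: sum.delta)

context module begin

lemma lact_block:
 "lact scale (m+n) (blockm m n S1 S2 S3) (blockm m n X1 X2 X3) =
   blockm m n (lact scale m S1 X1) (lact scale m S1 X2 + lact scale n S2 X3) (lact scale n S3 X3)"
  apply (rule ext)+
  apply (simp only: lact_def sum_split_add)
  apply (auto simp add: blockm_def)
  done

lemma ract_block:
 "ract scale (m+n) (blockm m n X1 X2 X3) (blockm m n S1 S2 S3) =
   blockm m n (ract scale m X1 S1) (ract scale m X1 S2 + ract scale n X2 S3) (ract scale n X3 S3)"
  apply (rule ext)+
  apply (simp only: ract_def sum_split_add)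
  apply (auto simp add: blockm_def)
  done

lemma lact_mat_on: "mat_on p k S \<Longrightarrow> mat_on k q X \<Longrightarrow> mat_on p q (lact scale k S X)"
  by (auto simp: mat_on_def lact_def)

lemma ract_mat_on: "mat_on p k X \<Longrightarrow> mat_on k q T \<Longrightarrow> mat_on p q (ract scale k X T)"
  by (auto simp: mat_on_def ract_def)

lemma scale_if: "(if P then 1 else 0) *s x = (if P then x else 0)"
  by simp

lemma scale_if': "(if P then a else 0) *s x = (if P then a *s x else 0)"
  by simp

lemma lact_idm: "mat_on n q X \<Longrightarrow> lact scale n (idm n) X = X"
  by (auto simp: fun_eq_iff lact_def idm_def scale_if sum_delta_lt sum_delta_lt' mat_on_def)

lemma ract_idm: "mat_on p n X \<Longrightarrow> ract scale n X (idm n) = X"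
  by (auto simp: fun_eq_iff ract_def idm_def scale_if sum_delta_lt sum_delta_lt' mat_on_def)

lemma lact_lact: "lact scale n (rmatmul n S T) X = lact scale n S (lact scale n T X)"
  apply (simp add: fun_eq_iff lact_def rmatmul_def scale_sum_left scale_sum_right)
  apply (rule allI)+ apply (rule sum.swap)
  done

lemma ract_ract: "ract scale n (ract scale n X S) T = ract scale n X (rmatmul n S T)"
  apply (simp add: fun_eq_iff ract_def rmatmul_def scale_sum_left scale_sum_right mult.commute)
  apply (rule allI)+ apply (rule sum.swap)
  done

lemma lact_ract: "lact scale n S (ract scale m X T) = ract scale m (lact scale n S X) T"
  apply (simp add: fun_eq_iff ract_def lact_def scale_sum_right)
  apply (rule allI)+ apply (subst sum.swap) apply (simp add: mult.commute)
  done

lemma sim_sim: "sim scale n P (sim scale n S X T) Q = sim scale n (rmatmul n P S) X (rmatmul n T Q)"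
  by (simp add: sim_def lact_ract lact_lact ract_ract)

lemma sim_id: "mat_on n n X \<Longrightarrow> sim scale n (idm n) X (idm n) = X"
  by (simp add: sim_def lact_idm ract_idm)

lemma sim_mat_on: "mat_on n n S \<Longrightarrow> mat_on n n T \<Longrightarrow> mat_on n n (sim scale n S X T)"
  by (auto simp: mat_on_def sim_def ract_def lact_def)

lemma lact_smat_right: "lact scale n S (smat scale r X) = smat scale r (lact scale n S X)"
  by (simp add: fun_eq_iff lact_def smat_def scale_sum_right mult.commute)

lemma ract_smat_left: "ract scale n (smat scale r X) T = smat scale r (ract scale n X T)"
  by (simp add: fun_eq_iff ract_def smat_def scale_sum_right mult.commute)

lemma smat_idm: "smat times r (idm n) i k = (if i = k \<and> i < n then r else 0)"
  by (simp add: smat_def idm_def)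

lemma lact_scalar_id: "mat_on n q X \<Longrightarrow> lact scale n (smat times r (idm n)) X = smat scale r X"
  unfolding fun_eq_iff lact_def smat_idm scale_if' sum_delta_lt
  by (auto simp: smat_def mat_on_def)

lemma ract_scalar_id: "mat_on p n X \<Longrightarrow> ract scale n X (smat times r (idm n)) = smat scale r X"
  unfolding fun_eq_iff ract_def smat_idm scale_if' sum_delta_lt'
  by (auto simp: smat_def mat_on_def sum.delta)

lemma smat_smat: "smat scale r (smat scale s X) = smat scale (r * s) X"
  by (simp add: fun_eq_iff smat_def)

lemma smat_one: "smat scale 1 X = X"
  by (simp add: fun_eq_iff smat_def)

lemma lact_zero_right[simp]: "lact scale n S 0 = 0"
  by (simp add: fun_eq_iff lact_def)
lemma lact_zero_left[simp]: "lact scale n 0 X = 0"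
  by (simp add: fun_eq_iff lact_def)
lemma ract_zero_right[simp]: "ract scale n X 0 = 0"
  by (simp add: fun_eq_iff ract_def)
lemma ract_zero_left[simp]: "ract scale n 0 X = 0"
  by (simp add: fun_eq_iff ract_def)
lemma lact_uminus_left: "lact scale n (-S) X = - lact scale n S X"
  by (simp add: fun_eq_iff lact_def sum_negf)
lemma lact_uminus_right: "lact scale n S (-X) = - lact scale n S X"
  by (simp add: fun_eq_iff lact_def sum_negf)
lemma ract_uminus_left: "ract scale n (-X) S = - ract scale n X S"
  by (simp add: fun_eq_iff ract_def sum_negf)
lemma ract_uminus_right: "ract scale n X (-S) = - ract scale n X S"
  by (simp add: fun_eq_iff ract_def sum_negf)

lemma sim_blockm_diag:
  "sim scale (p+q) (blockm p q S1 0 S2) (blockm p q X1 0 X2) (blockm p q T1 0 T2) =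
   blockm p q (sim scale p S1 X1 T1) 0 (sim scale q S2 X2 T2)"
  by (simp add: sim_def lact_block ract_block)

lemma sim_shear:
  assumes "mat_on p p A" "mat_on q q B" "mat_on p q S"
  shows "sim scale (p+q) (blockm p q (idm p) (-S) (idm q)) (blockm p q A 0 B) (blockm p q (idm p) S (idm q))
     = blockm p q A (ract scale p A S - lact scale q S B) B"
proof -
  have m: "mat_on p q (lact scale q S B)" using assms lact_mat_on by blast
  show ?thesis
    by (simp add: sim_def lact_block ract_block lact_idm[OF assms(1)] lact_idm[OF assms(2)]
      ract_idm[OF assms(1)] ract_idm[OF assms(2)] lact_uminus_left ract_uminus_left ract_idm[OF m])
qed



end

lemma module_mult: "module (times :: 'a::comm_ring_1 \<Rightarrow> 'a \<Rightarrow> 'a)"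
  by unfold_locales (simp_all add: algebra_simps)

lemma rmatmul_lact: "rmatmul n S T = lact times n S T"
  by (simp add: rmatmul_def lact_def fun_eq_iff)

lemma rmatmul_assoc: "rmatmul n (rmatmul n P S) T = rmatmul n P (rmatmul n S T)"
  using module.lact_lact[OF module_mult, of n P S T] by (simp add: rmatmul_lact)

lemma idm_mat_on: "mat_on n n (idm n)"
  by (simp add: mat_on_def idm_def)

lemma rmatmul_idl: "mat_on n q S \<Longrightarrow> rmatmul n (idm n) S = S"
  by (simp add: rmatmul_lact module.lact_idm[OF module_mult])

lemma rmatmul_idr: "mat_on p n S \<Longrightarrow> rmatmul n S (idm n) = S"
  using module.ract_idm[OF module_mult, of p n S]
  by (simp add: rmatmul_def ract_def mult.commute)

lemma rmatmul_mat_on: "mat_on p k S \<Longrightarrow> mat_on k q T \<Longrightarrow> mat_on p q (rmatmul k S T)"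
  by (simp add: rmatmul_lact module.lact_mat_on[OF module_mult])

lemma inv_pair_idm: "inv_pair n (idm n) (idm n)"
  by (simp add: inv_pair_def idm_mat_on rmatmul_idl[OF idm_mat_on])

lemma inv_pair_comp: "inv_pair n P Q \<Longrightarrow> inv_pair n S T \<Longrightarrow> inv_pair n (rmatmul n P S) (rmatmul n T Q)"
proof -
  assume a: "inv_pair n P Q" "inv_pair n S T"
  have m: "mat_on n n P" "mat_on n n Q" "mat_on n n S" "mat_on n n T"
    and e: "rmatmul n P Q = idm n" "rmatmul n Q P = idm n" "rmatmul n S T = idm n" "rmatmul n T S = idm n"
    using a by (auto simp: inv_pair_def)
  have 1: "rmatmul n (rmatmul n P S) (rmatmul n T Q) = idm n"
    by (simp add: rmatmul_assoc, subst rmatmul_assoc[symmetric, of n S T Q]) (simp add: e rmatmul_idl[OF m(2)] rmatmul_idl[OF m(3)])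
  have 2: "rmatmul n (rmatmul n T Q) (rmatmul n P S) = idm n"
    by (simp add: rmatmul_assoc, subst rmatmul_assoc[symmetric, of n Q P S]) (simp add: e rmatmul_idl[OF m(2)] rmatmul_idl[OF m(3)])
  show ?thesis using 1 2 m by (simp add: inv_pair_def rmatmul_mat_on)
qed

lemma blockm_mat_on: "mat_on (m+n) (m+n) (blockm m n A B C)"
  by (simp add: mat_on_def blockm_def)

lemma dsum_blockm: "dsum m X n Y = blockm m n X 0 Y"
  by (simp add: fun_eq_iff dsum_def blockm_def)

lemma idm_blockm: "idm (m+n) = blockm m n (idm m) 0 (idm n)"
  by (auto simp: fun_eq_iff idm_def blockm_def)


lemma lact_times_idr: "mat_on p q X \<Longrightarrow> lact times q X (idm q) = X"
  using rmatmul_idr[of p q X] by (simp add: rmatmul_lact)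

lemma lact_times_idl: "mat_on p q X \<Longrightarrow> lact times p (idm p) X = X"
  using rmatmul_idl[of p q X] by (simp add: rmatmul_lact)

lemma mat_on_uminus: "mat_on p q X \<Longrightarrow> mat_on p q (- (X :: 'a::ab_group_add mat))"
  by (auto simp: mat_on_def)

lemma inv_pair_swap: "inv_pair n S T \<Longrightarrow> inv_pair n T S"
  by (simp add: inv_pair_def)

lemma inv_pair_diag: "inv_pair p S1 T1 \<Longrightarrow> inv_pair q S2 T2 \<Longrightarrow>
   inv_pair (p+q) (blockm p q S1 0 S2) (blockm p q T1 0 T2)"
  unfolding inv_pair_def rmatmul_lact
  by (simp add: blockm_mat_on module.lact_block[OF module_mult] idm_blockm[symmetric]
    module.lact_zero_left[OF module_mult] module.lact_zero_right[OF module_mult])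

lemma inv_pair_shear: "mat_on p q S \<Longrightarrow>
   inv_pair (p+q) (blockm p q (idm p) (-S) (idm q)) (blockm p q (idm p) S (idm q))"
  unfolding inv_pair_def rmatmul_lact
  by (simp add: blockm_mat_on module.lact_block[OF module_mult] idm_blockm[symmetric]
     lact_times_idl[OF idm_mat_on] lact_times_idl lact_times_idr mat_on_uminus
     module.lact_uminus_left[OF module_mult] module.lact_uminus_right[OF module_mult])

lemma blockm_Z_eq: "blockm m n X Z Y = blockm m n X' Z' Y' \<Longrightarrow> mat_on m n Z \<Longrightarrow> mat_on m n Z' \<Longrightarrow> Z = Z'"
proof (rule ext, rule ext)
  fix i j assume e: "blockm m n X Z Y = blockm m n X' Z' Y'" and z: "mat_on m n Z" "mat_on m n Z'"
  show "Z i j = Z' i j"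
  proof (cases "i < m \<and> j < n")
    case True
    have "blockm m n X Z Y i (m+j) = blockm m n X' Z' Y' i (m+j)" using e by simp
    then show ?thesis using True by (simp add: blockm_def)
  next
    case False then show ?thesis using z by (auto simp: mat_on_def)
  qed
qed

definition inOt :: "('r::comm_ring_1 \<Rightarrow> 'm::ab_group_add \<Rightarrow> 'm) \<Rightarrow> (nat \<times> 'm mat) set \<Rightarrow> nat \<Rightarrow> 'm mat \<Rightarrow> bool" where
  "inOt scM \<Omega> n B \<longleftrightarrow> (\<exists>X S T. (n, X) \<in> \<Omega> \<and> inv_pair n S T \<and> B = sim scM n S X T)"

locale nc_ctx =
  fixes scM :: "'r::comm_ring_1 \<Rightarrow> 'm::ab_group_add \<Rightarrow> 'm"
    and scN :: "'r \<Rightarrow> 'n::ab_group_add \<Rightarrow> 'n"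
    and \<Omega> :: "(nat \<times> 'm mat) set"
    and f :: "nat \<Rightarrow> 'm mat \<Rightarrow> 'n mat"
  assumes mM: "module scM" and mN: "module scN"
    and ncs: "nc_set \<Omega>" and ra: "right_admissible scM \<Omega>"
    and ncf: "nc_fun scM scN \<Omega> f"
begin

lemma om_pos: "(n, X) \<in> \<Omega> \<Longrightarrow> 0 < n \<and> mat_on n n X"
  using ncs unfolding nc_set_def by blast
lemma om_dsum: "(n, X) \<in> \<Omega> \<Longrightarrow> (m, Y) \<in> \<Omega> \<Longrightarrow> (n + m, dsum n X m Y) \<in> \<Omega>"
  using ncs unfolding nc_set_def by blast
lemma f_mat: "(n, X) \<in> \<Omega> \<Longrightarrow> mat_on n n (f n X)"
  using ncf unfolding nc_fun_def by blast
lemma f_dsum: "(n, X) \<in> \<Omega> \<Longrightarrow> (m, Y) \<in> \<Omega> \<Longrightarrow> f (n + m) (dsum n X m Y) = dsum n (f n X) m (f m Y)"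
  using ncf unfolding nc_fun_def by blast
lemma f_sim: "(n, X) \<in> \<Omega> \<Longrightarrow> inv_pair n S T \<Longrightarrow> (n, sim scM n S X T) \<in> \<Omega> \<Longrightarrow>
   f n (sim scM n S X T) = sim scN n S (f n X) T"
  using ncf unfolding nc_fun_def by blast
lemma ra': "(n, X) \<in> \<Omega> \<Longrightarrow> (m, Y) \<in> \<Omega> \<Longrightarrow> mat_on n m Z \<Longrightarrow>
   \<exists>r s. r * s = 1 \<and> (n + m, blockm n m X (smat scM r Z) Y) \<in> \<Omega>"
  using ra unfolding right_admissible_def by blast

abbreviation "F \<equiv> nc_ext scM scN \<Omega> f"

lemma F_rep:
  assumes X: "(m, X) \<in> \<Omega>" and ST: "inv_pair m S T"
  shows "F m (sim scM m S X T) = sim scN m S (f m X) T"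
proof -
  define B where "B = sim scM m S X T"
  have "\<exists>W. \<exists>X' S' T'. (m, X') \<in> \<Omega> \<and> inv_pair m S' T' \<and> B = sim scM m S' X' T' \<and> W = sim scN m S' (f m X') T'"
    using X ST B_def by blast
  from someI_ex[OF this] obtain X' S' T' where h: "(m, X') \<in> \<Omega>" "inv_pair m S' T'" "B = sim scM m S' X' T'"
    and FB: "F m B = sim scN m S' (f m X') T'"
    unfolding nc_ext_def by blast
  have mS: "mat_on m m S" "mat_on m m T" "mat_on m m S'" "mat_on m m T'"
    and eS: "rmatmul m S T = idm m" "rmatmul m T' S' = idm m" "rmatmul m S' T' = idm m"
    using ST h(2) by (auto simp: inv_pair_def)
  have X'eq: "X' = sim scM m (rmatmul m T' S) X (rmatmul m T S')"
  proof -
    have "X' = sim scM m (idm m) X' (idm m)" using module.sim_id[OF mM] om_pos[OF h(1)] by simp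
    also have "\<dots> = sim scM m T' B S'" using h(3) eS module.sim_sim[OF mM] by simp
    also have "\<dots> = sim scM m (rmatmul m T' S) X (rmatmul m T S')" using B_def module.sim_sim[OF mM] by simp
    finally show ?thesis .
  qed
  have inv: "inv_pair m (rmatmul m T' S) (rmatmul m T S')"
    using inv_pair_comp[OF inv_pair_swap[OF h(2)] ST] .
  have fX': "f m X' = sim scN m (rmatmul m T' S) (f m X) (rmatmul m T S')"
    using f_sim[OF X inv] h(1) X'eq by simp
  have "F m B = sim scN m (rmatmul m S' (rmatmul m T' S)) (f m X) (rmatmul m (rmatmul m T S') T')"
    using FB fX' module.sim_sim[OF mN] by simp
  also have "\<dots> = sim scN m S (f m X) T"
    by (simp add: rmatmul_assoc eS rmatmul_idr[OF mS(2)] flip: rmatmul_assoc[of m S' T' S])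
       (simp add: rmatmul_idl[OF mS(1)])
  finally show ?thesis using B_def by simp
qed

lemma inOt_mat: "inOt scM \<Omega> n B \<Longrightarrow> mat_on n n B"
  unfolding inOt_def inv_pair_def using module.sim_mat_on[OF mM] by blast

lemma F_mat: "inOt scM \<Omega> n B \<Longrightarrow> mat_on n n (F n B)"
  unfolding inOt_def inv_pair_def using module.sim_mat_on[OF mN] F_rep inv_pair_def by metis

lemma inOt_Om: "(n, X) \<in> \<Omega> \<Longrightarrow> inOt scM \<Omega> n X \<and> F n X = f n X"
proof -
  assume X: "(n, X) \<in> \<Omega>"
  have e: "X = sim scM n (idm n) X (idm n)" using module.sim_id[OF mM] om_pos[OF X] by simp
  have "F n X = f n X"
    using F_rep[OF X inv_pair_idm] e module.sim_id[OF mN] f_mat[OF X] by simp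
  then show ?thesis using e X inv_pair_idm unfolding inOt_def by blast
qed

lemma F_sim:
  assumes B: "inOt scM \<Omega> n B" and PQ: "inv_pair n P Q"
  shows "inOt scM \<Omega> n (sim scM n P B Q) \<and> F n (sim scM n P B Q) = sim scN n P (F n B) Q"
proof -
  obtain X S T where h: "(n, X) \<in> \<Omega>" "inv_pair n S T" "B = sim scM n S X T"
    using B unfolding inOt_def by blast
  have e: "sim scM n P B Q = sim scM n (rmatmul n P S) X (rmatmul n T Q)"
    using h(3) module.sim_sim[OF mM] by simp
  have inv: "inv_pair n (rmatmul n P S) (rmatmul n T Q)" using inv_pair_comp[OF PQ h(2)] .
  show ?thesis
    using e inv h F_rep module.sim_sim[OF mN] unfolding inOt_def by metis
qed

lemma F_dsum:
  assumes A: "inOt scM \<Omega> p A" and B: "inOt scM \<Omega> q B"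
  shows "inOt scM \<Omega> (p+q) (dsum p A q B) \<and> F (p+q) (dsum p A q B) = dsum p (F p A) q (F q B)"
proof -
  obtain X1 S1 T1 where h1: "(p, X1) \<in> \<Omega>" "inv_pair p S1 T1" "A = sim scM p S1 X1 T1"
    using A unfolding inOt_def by blast
  obtain X2 S2 T2 where h2: "(q, X2) \<in> \<Omega>" "inv_pair q S2 T2" "B = sim scM q S2 X2 T2"
    using B unfolding inOt_def by blast
  have inv: "inv_pair (p+q) (blockm p q S1 0 S2) (blockm p q T1 0 T2)" using inv_pair_diag[OF h1(2) h2(2)] .
  have X: "(p+q, blockm p q X1 0 X2) \<in> \<Omega>" using om_dsum[OF h1(1) h2(1)] by (simp add: dsum_blockm)
  have e: "dsum p A q B = sim scM (p+q) (blockm p q S1 0 S2) (blockm p q X1 0 X2) (blockm p q T1 0 T2)"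
    using h1(3) h2(3) module.sim_blockm_diag[OF mM] by (simp add: dsum_blockm)
  have "F (p+q) (dsum p A q B) = sim scN (p+q) (blockm p q S1 0 S2) (blockm p q (f p X1) 0 (f q X2)) (blockm p q T1 0 T2)"
    using F_rep[OF X inv] e f_dsum[OF h1(1) h2(1)] by (simp add: dsum_blockm)
  also have "\<dots> = dsum p (F p A) q (F q B)"
    using module.sim_blockm_diag[OF mN] F_rep[OF h1(1,2)] F_rep[OF h2(1,2)] h1(3) h2(3) by (simp add: dsum_blockm)
  finally show ?thesis using e X inv unfolding inOt_def by blast
qed

lemma intertwine:
  assumes A: "inOt scM \<Omega> p A" and B: "inOt scM \<Omega> q B" and S: "mat_on p q S"
    and eq: "ract scM p A S = lact scM q S B"
  shows "ract scN p (F p A) S = lact scN q S (F q B)"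
proof -
  define W where "W = blockm p q A 0 B"
  have W: "inOt scM \<Omega> (p+q) W" "F (p+q) W = blockm p q (F p A) 0 (F q B)"
    using F_dsum[OF A B] by (simp_all add: W_def dsum_blockm)
  have inv: "inv_pair (p+q) (blockm p q (idm p) (-S) (idm q)) (blockm p q (idm p) S (idm q))"
    using inv_pair_shear[OF S] .
  have sW: "sim scM (p+q) (blockm p q (idm p) (-S) (idm q)) W (blockm p q (idm p) S (idm q)) = W"
    using module.sim_shear[OF mM inOt_mat[OF A] inOt_mat[OF B] S] eq by (simp add: W_def)
  have "F (p+q) W = sim scN (p+q) (blockm p q (idm p) (-S) (idm q)) (F (p+q) W) (blockm p q (idm p) S (idm q))"
    using F_sim[OF W(1) inv] sW by simp
  also have "\<dots> = blockm p q (F p A) (ract scN p (F p A) S - lact scN q S (F q B)) (F q B)"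
    using module.sim_shear[OF mN F_mat[OF A] F_mat[OF B] S] W(2) by simp
  finally have "blockm p q (F p A) 0 (F q B) = blockm p q (F p A) (ract scN p (F p A) S - lact scN q S (F q B)) (F q B)"
    using W(2) by simp
  moreover have "mat_on p q (ract scN p (F p A) S - lact scN q S (F q B))"
    using module.ract_mat_on[OF mN F_mat[OF A] S] module.lact_mat_on[OF mN S F_mat[OF B]]
    by (simp add: mat_on_def)
  ultimately have "0 = ract scN p (F p A) S - lact scN q S (F q B)"
    using blockm_Z_eq by (metis mat_on_def zero_fun_apply)
  then show ?thesis by simp
qed

lemma inOt_ext:
  assumes B: "inOt scM \<Omega> m B" and X: "(n, X) \<in> \<Omega>" and Z: "mat_on m n Z"
  shows "inOt scM \<Omega> (m+n) (blockm m n B Z X)"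
proof -
  obtain W S T where h: "(m, W) \<in> \<Omega>" "inv_pair m S T" "B = sim scM m S W T"
    using B unfolding inOt_def by blast
  have mS: "mat_on m m S" "mat_on m m T" "rmatmul m S T = idm m" using h(2) by (auto simp: inv_pair_def)
  define Z' where "Z' = lact scM m T Z"
  have Z': "mat_on m n Z'" using module.lact_mat_on[OF mM mS(2) Z] Z'_def by simp
  obtain r s where rs: "r * s = 1" "(m+n, blockm m n W (smat scM r Z') X) \<in> \<Omega>"
    using ra'[OF h(1) X Z'] by blast
  define P where "P = blockm m n S 0 (smat times r (idm n))"
  define Q where "Q = blockm m n T 0 (smat times s (idm n))"
  have inv: "inv_pair (m+n) P Q"
  proof -
    have ms: "mat_on n n (smat times c (idm n))" for c by (simp add: smat_def idm_def mat_on_def)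
    have "inv_pair n (smat times r (idm n)) (smat times s (idm n))"
      unfolding inv_pair_def rmatmul_lact
      using rs(1) ms[of r] ms[of s] by (simp add: module.lact_scalar_id[OF module_mult ms] module.smat_smat[OF module_mult]
        module.smat_one[OF module_mult] mult.commute[of s r] idm_mat_on)
    then show ?thesis unfolding P_def Q_def using inv_pair_diag[OF h(2)] by blast
  qed
  have mW: "mat_on m m W" "mat_on n n X" using om_pos h(1) X by auto
  have "sim scM (m+n) P (blockm m n W (smat scM r Z') X) Q = blockm m n B Z X"
  proof -
    have a: "lact scM n (smat times r (idm n)) X = smat scM r X"
      using module.lact_scalar_id[OF mM mW(2)] .
    have mSZ: "mat_on m n (smat scM r Z)"
      using Z by (simp add: mat_on_def smat_def module.scale_zero_right[OF mM])
    have mX: "mat_on n n (smat scM r X)" using mW(2) by (simp add: mat_on_def smat_def module.scale_zero_right[OF mM])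
    have SZ: "lact scM m S Z' = Z"
      unfolding Z'_def using module.lact_lact[OF mM, of m S T Z] mS(3) module.lact_idm[OF mM Z] by simp
    show ?thesis unfolding sim_def P_def Q_def
      by (simp add: module.lact_block[OF mM] module.ract_block[OF mM] a module.lact_smat_right[OF mM]
         module.ract_scalar_id[OF mM mSZ] module.ract_scalar_id[OF mM mX] module.smat_smat[OF mM]
         mult.commute[of s r] rs(1) module.smat_one[OF mM] SZ h(3) sim_def
         module.lact_zero_left[OF mM] module.ract_zero_right[OF mM])
  qed
  then show ?thesis using rs(2) inv unfolding inOt_def by metis
qed

end


definition bd :: "nat \<Rightarrow> nat \<Rightarrow> (nat \<Rightarrow> ('a::zero) mat) \<Rightarrow> (nat \<Rightarrow> 'a mat) \<Rightarrow> 'a mat" where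
  "bd n L Xf Zf = (\<lambda>i j. if i < Suc L * n \<and> j < Suc L * n then
     (if i div n = j div n then Xf (i div n) (i mod n) (j mod n)
      else if j div n = Suc (i div n) then Zf (i div n) (i mod n) (j mod n) else 0) else 0)"

lemma decomp: "0 < (n::nat) \<Longrightarrow> \<exists>p a. i = p * n + a \<and> a < n"
  by (metis div_mult_mod_eq mod_less_divisor)

lemma lt_blk: "a < (n::nat) \<Longrightarrow> (p * n + a < k * n) = (p < k)"
proof
  assume a: "a < n" "p * n + a < k * n"
  then have "p * n < k * n" by linarith
  then show "p < k" by (simp add: mult_less_cancel2)
next
  assume a: "a < n" "p < k"
  then have "Suc p * n \<le> k * n" by (simp add: mult_le_cancel2 del: mult_Suc)
  then show "p * n + a < k * n" using a by simp
qed

lemma le_blk: "a < (n::nat) \<Longrightarrow> (k * n \<le> p * n + a) = (k \<le> p)"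
  using lt_blk[of a n p k] by (metis lt_blk not_le less_Suc_eq_le)

lemma div_blk: "a < (n::nat) \<Longrightarrow> (p * n + a) div n = p"
  by simp
lemma mod_blk: "a < (n::nat) \<Longrightarrow> (p * n + a) mod n = a"
  by simp

lemma bd_entry: "a < n \<Longrightarrow> b < n \<Longrightarrow> bd n L Xf Zf (p * n + a) (q * n + b) =
   (if p \<le> L \<and> q \<le> L then (if p = q then Xf p a b else if q = Suc p then Zf p a b else 0) else 0)"
  unfolding bd_def apply (simp only: div_blk mod_blk lt_blk)
  apply (auto simp: less_Suc_eq_le)
  done

lemma bd_ext:
  fixes n :: nat and M M' :: "nat \<Rightarrow> nat \<Rightarrow> 'a"
  assumes n: "0 < n" and h: "\<And>p a q b. a < n \<Longrightarrow> b < n \<Longrightarrow> M (p * n + a) (q * n + b) = M' (p * n + a) (q * n + b)"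
  shows "M = M'"
proof (rule ext, rule ext)
  fix i j
  obtain p a where i: "i = p * n + a" "a < n" using decomp[OF n] by blast
  obtain q b where j: "j = q * n + b" "b < n" using decomp[OF n] by blast
  show "M i j = M' i j" using h i j by simp
qed

lemma bd_cong: "0 < n \<Longrightarrow> (\<And>p. p \<le> L \<Longrightarrow> Xf p = Xf' p) \<Longrightarrow> (\<And>p. p < L \<Longrightarrow> Zf p = Zf' p) \<Longrightarrow>
   bd n L Xf Zf = bd n L Xf' Zf'"
  by (rule bd_ext) (auto simp: bd_entry)

lemma ge_blk: "0 < (p::nat) \<Longrightarrow> n \<le> p * n + a"
  by (cases p) auto

lemma bd_0: "0 < n \<Longrightarrow> mat_on n n (Xf 0) \<Longrightarrow> bd n 0 Xf Zf = Xf 0"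
  apply (rule bd_ext, assumption)
  apply (simp add: bd_entry)
  apply (auto simp: mat_on_def dest!: ge_blk)
  done

lemma bd_Suc: "0 < n \<Longrightarrow> bd n (Suc L) Xf Zf = blockm (Suc L * n) n (bd n L Xf Zf)
   (\<lambda>i j. if L * n \<le> i \<and> i < Suc L * n \<and> j < n then Zf L (i - L * n) j else 0) (Xf (Suc L))"
proof (rule bd_ext, assumption)
  fix p a q b assume n: "0 < n" and ab: "a < n" "b < n"
  show "bd n (Suc L) Xf Zf (p * n + a) (q * n + b) = blockm (Suc L * n) n (bd n L Xf Zf)
   (\<lambda>i j. if L * n \<le> i \<and> i < Suc L * n \<and> j < n then Zf L (i - L * n) j else 0) (Xf (Suc L)) (p * n + a) (q * n + b)"
  proof -
    have c: "p * n + a < Suc L * n \<longleftrightarrow> p \<le> L" "q * n + b < Suc L * n \<longleftrightarrow> q \<le> L"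
      "Suc L * n \<le> p * n + a \<longleftrightarrow> Suc L \<le> p" "Suc L * n \<le> q * n + b \<longleftrightarrow> Suc L \<le> q"
      "p * n + a < Suc L * n + n \<longleftrightarrow> p \<le> Suc L" "q * n + b < Suc L * n + n \<longleftrightarrow> q \<le> Suc L"
      "L * n \<le> p * n + a \<longleftrightarrow> L \<le> p"
      using lt_blk[OF ab(1)] lt_blk[OF ab(2)] le_blk[OF ab(1)] le_blk[OF ab(2)]
      by (simp_all add: less_Suc_eq_le add.commute[of "Suc L * n" n] flip: mult_Suc)
    note e = bd_entry[OF ab, of "Suc L" Xf Zf p q]
    show ?thesis
    proof (cases "q \<le> L")
      case True
      then show ?thesis using ab c e by (auto simp: blockm_def bd_entry)
    next
      case False
      then show ?thesis
      proof (cases "q = Suc L")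
        case q: True
        have j: "q * n + b - Suc L * n = b" using q by simp
        show ?thesis
        proof (cases "p = L")
          case True
          have "p * n + a - L * n = a" using True by simp
          then show ?thesis using ab c q j True e by (auto simp: blockm_def bd_entry)
        next
          case False
          then show ?thesis using ab c q j e
            apply (cases "p = Suc L")
            apply (auto simp: blockm_def bd_entry)
            done
        qed
      next
        case False
        then show ?thesis using ab c \<open>\<not> q \<le> L\<close> e by (auto simp: blockm_def bd_entry)
      qed
    qed
  qed
qed


lemma sum_delta_conj: "(\<Sum>k<m. if k = c \<and> P then g k else 0) = (if c < (m::nat) \<and> P then g c else 0)"
  by (cases P) (simp_all add: sum.delta')

definition E1 :: "nat \<Rightarrow> ('r::comm_ring_1) mat" where
  "E1 q = (\<lambda>k j. if k = j \<and> j < q then 1 else 0)"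

definition E2 :: "nat \<Rightarrow> nat \<Rightarrow> nat \<Rightarrow> ('r::comm_ring_1) mat" where
  "E2 n N q = (\<lambda>k j. if k = j + n \<and> N * n \<le> j \<and> j < q then 1 else 0)"

lemma E_mat_on: "q + n \<le> p \<Longrightarrow> mat_on p q (E1 q + E2 n N q)" "q \<le> p \<Longrightarrow> mat_on p q (E1 q)"
  by (auto simp: mat_on_def E1_def E2_def)

context module begin

lemma ract_add_right: "ract scale m G (S1 + S2) = ract scale m G S1 + ract scale m G S2"
  by (simp add: fun_eq_iff ract_def scale_left_distrib sum.distrib)

lemma lact_add_left: "lact scale m (S1 + S2) G = lact scale m S1 G + lact scale m S2 G"
  by (simp add: fun_eq_iff lact_def scale_left_distrib sum.distrib)

lemma ract_E1: "q \<le> p \<Longrightarrow> ract scale p G (E1 q) i j = (if j < q then G i j else 0)"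
  unfolding ract_def E1_def scale_if' by (simp add: sum_delta_conj)

lemma ract_E2: "q + n \<le> p \<Longrightarrow> ract scale p G (E2 n N q) i j = (if N * n \<le> j \<and> j < q then G i (j + n) else 0)"
  unfolding ract_def E2_def scale_if' by (simp add: sum_delta_conj)

lemma lact_E1: "lact scale q (E1 q) G i j = (if i < q then G i j else 0)"
proof -
  have "lact scale q (E1 q) G i j = (\<Sum>k<q. if k = i \<and> i < q then G k j else 0)"
    unfolding lact_def E1_def scale_if' by (rule sum.cong) auto
  then show ?thesis by (simp add: sum_delta_conj)
qed

lemma lact_E2: "lact scale q (E2 n N q) G i j = (if n \<le> i \<and> N * n \<le> i - n \<and> i - n < q then G (i - n) j else 0)"
proof -
  have "lact scale q (E2 n N q) G i j = (\<Sum>k<q. if k = i - n \<and> (n \<le> i \<and> N * n \<le> i - n \<and> i - n < q) then G k j else 0)"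
    unfolding lact_def E2_def scale_if' by (rule sum.cong) auto
  then show ?thesis by (simp add: sum_delta_conj)
qed

end


definition Am :: "nat \<Rightarrow> ('a::zero) mat \<Rightarrow> 'a mat \<Rightarrow> nat \<Rightarrow> 'a mat" where
  "Am n Y Z L = bd n L (\<lambda>_. Y) (\<lambda>_. Z)"
definition Bm :: "nat \<Rightarrow> ('a::zero) mat \<Rightarrow> 'a mat \<Rightarrow> 'a mat \<Rightarrow> nat \<Rightarrow> 'a mat" where
  "Bm n Y X Z L = bd n L (\<lambda>p. if p < L then Y else X) (\<lambda>_. Z)"

lemma blk_shift: "Q * n + b + n = Suc Q * (n::nat) + b"
  by simp

context module begin

lemma int_eq1:
  assumes n: "0 < n"
  shows "ract scale (Suc (Suc N) * n) (Bm n Y X (X - Y) (Suc N)) (E1 (Suc N * n) + E2 n N (Suc N * n))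
       = lact scale (Suc N * n) (E1 (Suc N * n) + E2 n N (Suc N * n)) (Bm n Y X (X - Y) N)"
proof (rule bd_ext[OF n])
  fix P a Q b assume ab: "a < n" "b < n"
  have le: "Suc N * n \<le> Suc (Suc N) * n" "Suc N * n + n \<le> Suc (Suc N) * n" by simp_all
  note c = lt_blk[OF ab(1)] lt_blk[OF ab(2)] le_blk[OF ab(1)] le_blk[OF ab(2)]
  show "ract scale (Suc (Suc N) * n) (Bm n Y X (X - Y) (Suc N)) (E1 (Suc N * n) + E2 n N (Suc N * n)) (P * n + a) (Q * n + b)
       = lact scale (Suc N * n) (E1 (Suc N * n) + E2 n N (Suc N * n)) (Bm n Y X (X - Y) N) (P * n + a) (Q * n + b)"
  proof (cases P)
    case 0
    then show ?thesis using ab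
      by (simp only: ract_add_right lact_add_left plus_fun_apply ract_E1[OF le(1)] ract_E2[OF le(2)]
         lact_E1 lact_E2 c blk_shift Bm_def bd_entry) auto
  next
    case (Suc P')
    have i: "Suc P' * n + a - n = P' * n + a" by simp
    have i2: "n \<le> Suc P' * n + a" by simp
    show ?thesis using ab Suc
      by (simp only: ract_add_right lact_add_left plus_fun_apply ract_E1[OF le(1)] ract_E2[OF le(2)]
         lact_E1 lact_E2 c blk_shift Bm_def bd_entry i i2 simp_thms if_True) auto
  qed
qed

lemma int_eq2:
  assumes n: "0 < n"
  shows "ract scale (Suc (Suc N) * n) (Bm n Y X Z (Suc N)) (E1 (Suc N * n))
       = lact scale (Suc N * n) (E1 (Suc N * n)) (Am n Y Z N)"
proof (rule bd_ext[OF n])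
  fix P a Q b assume ab: "a < n" "b < n"
  have le: "Suc N * n \<le> Suc (Suc N) * n" by simp
  note c = lt_blk[OF ab(1)] lt_blk[OF ab(2)]
  show "ract scale (Suc (Suc N) * n) (Bm n Y X Z (Suc N)) (E1 (Suc N * n)) (P * n + a) (Q * n + b)
       = lact scale (Suc N * n) (E1 (Suc N * n)) (Am n Y Z N) (P * n + a) (Q * n + b)"
    using ab by (simp only: ract_E1[OF le] lact_E1 c Am_def Bm_def bd_entry) auto
qed

end


definition cor :: "nat \<Rightarrow> ('a::zero) mat \<Rightarrow> nat \<Rightarrow> 'a mat" where
  "cor n M L = (\<lambda>i j. if i < n \<and> j < n then M i (j + L * n) else 0)"

lemma boff_rep: "boff (replicate m n) k = min k m * n"
  by (simp add: boff_def sum_list_replicate)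

lemma bidx_rep: assumes "0 < n" "i < m * n" shows "bidx (replicate m n) i = i div n"
  unfolding bidx_def boff_rep
proof (rule Least_equality)
  have "i div n < m" using assms by (simp add: less_mult_imp_div_less)
  then show "i < min (Suc (i div n)) m * n" using assms
    by (simp add: min_def) (metis dividend_less_div_times)
next
  fix y assume "i < min (Suc y) m * n"
  then have "i < Suc y * n" by (metis min_def mult_le_cancel2 linorder_not_le order.strict_trans2 nat_le_linear)
  then show "i div n \<le> y" using assms by (simp add: less_Suc_eq_le less_mult_imp_div_less flip: less_Suc_eq_le)
qed

lemma bidiag_rep: assumes n: "0 < n"
  shows "bidiag (replicate (Suc L) n) Xs Zs = bd n L (\<lambda>p. Xs ! p) (\<lambda>p. Zs ! p)"
proof (rule ext, rule ext)
  fix i j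
  show "bidiag (replicate (Suc L) n) Xs Zs i j = bd n L (\<lambda>p. Xs ! p) (\<lambda>p. Zs ! p) i j"
  proof (cases "i < Suc L * n \<and> j < Suc L * n")
    case True
    have d: "i div n \<le> L" "j div n \<le> L" using True
      by (metis less_mult_imp_div_less less_Suc_eq_le)+
    have "i - i div n * n = i mod n" "j - j div n * n = j mod n" by (simp_all add: minus_div_mult_eq_mod)
    moreover have b: "bidx (replicate (Suc L) n) i = i div n" "bidx (replicate (Suc L) n) j = j div n"
      using bidx_rep[OF n, of i "Suc L"] bidx_rep[OF n, of j "Suc L"] True by (simp_all del: replicate_Suc)
    moreover have "boff (replicate (Suc L) n) (i div n) = i div n * n" "boff (replicate (Suc L) n) (j div n) = j div n * n"
      using d by (simp_all add: boff_rep min_def del: replicate_Suc)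
    moreover have "sum_list (replicate (Suc L) n) = Suc L * n" by (simp only: sum_list_replicate) simp
    ultimately show ?thesis using True
      unfolding bidiag_def bd_def Let_def by (auto simp del: replicate_Suc)
  next
    case False
    then show ?thesis by (auto simp: bidiag_def bd_def sum_list_replicate)
  qed
qed

lemma Delta_rep: assumes n: "0 < n"
  shows "Delta scM scN \<Omega> f (replicate (Suc L) n) Xs Zs
     = cor n (nc_ext scM scN \<Omega> f (Suc L * n) (bd n L (\<lambda>p. Xs ! p) (\<lambda>p. Zs ! p))) L"
proof -
  have e: "length (replicate (Suc L) n) - 1 = L" "replicate (Suc L) n ! 0 = n" "replicate (Suc L) n ! L = n"
    "boff (replicate (Suc L) n) 0 = 0" "boff (replicate (Suc L) n) L = L * n"
    "sum_list (replicate (Suc L) n) = Suc L * n"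
    by (simp_all only: boff_rep length_replicate nth_replicate sum_list_replicate) simp_all
  show ?thesis unfolding Delta_def cor_def Let_def e bidiag_rep[OF n] add_0_right by (rule refl)
qed


context nc_ctx begin

lemma bd_inOt:
  "(\<And>p. p \<le> L \<Longrightarrow> (n, Xf p) \<in> \<Omega>) \<Longrightarrow> (\<And>p. p < L \<Longrightarrow> mat_on n n (Zf p)) \<Longrightarrow>
   inOt scM \<Omega> (Suc L * n) (bd n L Xf Zf)"
proof (induction L)
  case 0
  have X: "(n, Xf 0) \<in> \<Omega>" using 0 by simp
  then show ?case using bd_0[of n Xf Zf] om_pos[OF X] inOt_Om[OF X] by simp
next
  case (Suc L)
  have X: "(n, Xf (Suc L)) \<in> \<Omega>" using Suc by simp
  have n: "0 < n" using om_pos[OF X] by simp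
  have IH: "inOt scM \<Omega> (Suc L * n) (bd n L Xf Zf)" using Suc by simp
  have Z: "mat_on (Suc L * n) n (\<lambda>i j. if L * n \<le> i \<and> i < Suc L * n \<and> j < n then Zf L (i - L * n) j else 0)"
    by (simp add: mat_on_def)
  have e: "Suc (Suc L) * n = Suc L * n + n" by simp
  show ?case unfolding bd_Suc[OF n] e using inOt_ext[OF IH X Z] .
qed

lemma step:
  assumes X: "(n, X) \<in> \<Omega>" and Y: "(n, Y) \<in> \<Omega>"
  shows "cor n (F (Suc N * n) (Bm n Y X (X - Y) N)) N =
    cor n (F (Suc N * n) (Am n Y (X - Y) N)) N + cor n (F (Suc (Suc N) * n) (Bm n Y X (X - Y) (Suc N))) (Suc N)"
proof -
  have n: "0 < n" using om_pos[OF X] by simp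
  have Zm: "mat_on n n (X - Y)" using om_pos[OF X] om_pos[OF Y] by (simp add: mat_on_def)
  have iB: "inOt scM \<Omega> (Suc L * n) (Bm n Y X (X - Y) L)" for L
    unfolding Bm_def by (rule bd_inOt) (use X Y Zm in auto)
  have iA: "inOt scM \<Omega> (Suc L * n) (Am n Y (X - Y) L)" for L
    unfolding Am_def by (rule bd_inOt) (use X Y Zm in auto)
  let ?p = "Suc (Suc N) * n" and ?q = "Suc N * n"
  let ?FC = "F ?p (Bm n Y X (X - Y) (Suc N))" and ?FB = "F ?q (Bm n Y X (X - Y) N)" and ?FA = "F ?q (Am n Y (X - Y) N)"
  have le: "?q \<le> ?p" "?q + n \<le> ?p" by simp_all
  have I1: "ract scN ?p ?FC (E1 ?q + E2 n N ?q) = lact scN ?q (E1 ?q + E2 n N ?q) ?FB"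
    by (rule intertwine[OF iB iB E_mat_on(1)[OF le(2)] module.int_eq1[OF mM n]])
  have I2: "ract scN ?p ?FC (E1 ?q) = lact scN ?q (E1 ?q) ?FA"
    by (rule intertwine[OF iB iA E_mat_on(2)[OF le(1)] module.int_eq2[OF mM n]])
  show ?thesis
  proof (rule ext, rule ext)
    fix i j
    show "cor n ?FB N i j = (cor n ?FA N + cor n ?FC (Suc N)) i j"
    proof (cases "i < n \<and> j < n")
      case True
      have c1: "j + N * n < ?q" "N * n \<le> j + N * n" "\<not> (n \<le> i)" "i < ?q" using True by simp_all
      have "ract scN ?p ?FC (E1 ?q + E2 n N ?q) i (j + N * n) = lact scN ?q (E1 ?q + E2 n N ?q) ?FB i (j + N * n)"
        using I1 by simp
      then have a: "?FC i (j + N * n) + ?FC i (j + N * n + n) = ?FB i (j + N * n)"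
        using c1 by (simp only: module.ract_add_right[OF mN] module.lact_add_left[OF mN] plus_fun_apply
          module.ract_E1[OF mN le(1)] module.ract_E2[OF mN le(2)] module.lact_E1[OF mN] module.lact_E2[OF mN]
          if_True if_False simp_thms) simp
      have "ract scN ?p ?FC (E1 ?q) i (j + N * n) = lact scN ?q (E1 ?q) ?FA i (j + N * n)"
        using I2 by simp
      then have b: "?FC i (j + N * n) = ?FA i (j + N * n)"
        using c1 by (simp only: module.ract_E1[OF mN le(1)] module.lact_E1[OF mN] if_True)
      have e: "j + N * n + n = j + Suc N * n" by simp
      show ?thesis using True a b e by (simp add: cor_def)
    next
      case False
      then show ?thesis by (auto simp: cor_def)
    qed
  qed
qed

lemma tt:
  assumes X: "(n, X) \<in> \<Omega>" and Y: "(n, Y) \<in> \<Omega>"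
  shows "f n X = (\<Sum>l<N. cor n (F (Suc l * n) (Am n Y (X - Y) l)) l) + cor n (F (Suc N * n) (Bm n Y X (X - Y) N)) N"
proof (induction N)
  case 0
  have n: "0 < n" and m: "mat_on n n X" using om_pos[OF X] by auto
  have "Bm n Y X (X - Y) 0 = X" unfolding Bm_def using bd_0[OF n, of "\<lambda>p. if p < 0 then Y else X"] m by simp
  then have "cor n (F (Suc 0 * n) (Bm n Y X (X - Y) 0)) 0 = cor n (f n X) 0" using inOt_Om[OF X] by simp
  also have "\<dots> = f n X" using f_mat[OF X] by (auto simp: cor_def mat_on_def fun_eq_iff)
  finally show ?case by (simp only: lessThan_0 sum.empty add_0_left)
next
  case (Suc N)
  show ?case by (simp only: Suc.IH step[OF X Y, of N] sum.lessThan_Suc add.assoc)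
qed

end



theorem theorem4p1:
  fixes scM :: "'r::comm_ring_1 \<Rightarrow> 'm::ab_group_add \<Rightarrow> 'm"
    and scN :: "'r \<Rightarrow> 'n::ab_group_add \<Rightarrow> 'n"
    and \<Omega> :: "(nat \<times> 'm mat) set"
    and f :: "nat \<Rightarrow> 'm mat \<Rightarrow> 'n mat"
    and n N :: nat and X Y :: "'m mat"
  assumes "module scM" and "module scN"
    and "nc_set \<Omega>" and "right_admissible scM \<Omega>"
    and "nc_fun scM scN \<Omega> f"
    and "(n, Y) \<in> \<Omega>" and "(n, X) \<in> \<Omega>"
  shows "f n X =
    (\<Sum>l\<le>N. Delta scM scN \<Omega> f (replicate (Suc l) n) (replicate (Suc l) Y) (replicate l (X - Y)))
    + Delta scM scN \<Omega> f (replicate (N + 2) n) (replicate (Suc N) Y @ [X]) (replicate (Suc N) (X - Y))"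
proof -
  interpret nc_ctx scM scN \<Omega> f
    using assms(1-5) by (simp add: nc_ctx_def)
  have n: "0 < n" using om_pos[OF assms(7)] by simp
  have D1: "Delta scM scN \<Omega> f (replicate (Suc l) n) (replicate (Suc l) Y) (replicate l (X - Y))
      = cor n (F (Suc l * n) (Am n Y (X - Y) l)) l" for l
    unfolding Delta_rep[OF n] Am_def
    by (subst bd_cong[OF n]) (auto simp del: replicate_Suc)
  have D2: "Delta scM scN \<Omega> f (replicate (N + 2) n) (replicate (Suc N) Y @ [X]) (replicate (Suc N) (X - Y))
      = cor n (F (Suc (Suc N) * n) (Bm n Y X (X - Y) (Suc N))) (Suc N)"
  proof -
    have e: "N + 2 = Suc (Suc N)" by simp
    show ?thesis unfolding e Delta_rep[OF n] Bm_def
      by (subst bd_cong[OF n]) (auto simp: nth_append simp del: replicate_Suc)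
  qed
  show ?thesis
    unfolding D1 D2 atMost_atLeast0 using tt[OF assms(7,6), of "Suc N"]
    by (simp only: lessThan_Suc_atMost atLeast0AtMost)
qed

end
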